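(* Let $n,m$ be integers with $0<m<n$. Then for every $k=1,\ldots,n$ and $x\in[-1,1]$, $$\tilde\varphi_{n,k}^m(x)=\sqrt{\frac{\pi}{n}}\sum_{h=1}^n\left[\sum_{r=0}^{n-1}\frac{p_r(x_k^n)p_r(x_h^n)}{\sqrt{\nu_{n,r}^m}}\right]\Phi_{n,h}^m(x).$$
   Context: The orthonormal Chebyshev polynomials are $p_0(x)=\sqrt{1/\pi}$ and $p_r(x)=\sqrt{2/\pi}\cos(r\arccos x)$ for $r\ge1$, $x\in[-1,1]$. The Chebyshev nodes are $x_k^n=\cos\frac{(2k-1)\pi}{2n}$, $k=1,\ldots,n$. For $0<m<n$ set $\mu_{n,r}^m=1$ if $0\le r\le n-m$, $\mu_{n,r}^m=\frac{m+n-r}{2m}$ if $n-m<r<n+m$, and $\mu_{n,r}^m=0$ otherwise. The interpolating VP scaling functions are $\Phi_{n,k}^m(x)=\frac{\pi}{n}\sum_{r=0}^{n+m-1}\mu_{n,r}^m p_r(x_k^n)p_r(x)$, $k=1,\ldots,n$. For $r=0,\ldots,n-1$ define $q_{n,r}^m=p_r$ if $0\le r\le n-m$, and $q_{n,r}^m=\mu_{n,r}^m p_r-\mu_{n,2n-r}^m p_{2n-r}$ if $n-m<r<n$; set $\nu_{n,r}^m=1$ if $0\le r\le n-m$ and $\nu_{n,r}^m=\frac{m^2+(n-r)^2}{2m^2}$ if $n-m<r<n$. The orthonormal VP scaling functions are $\tilde\varphi_{n,k}^m(x)=\sum_{r=0}^{n-1}\sqrt{\frac{\pi}{n\,\nu_{n,r}^m}}\,p_r(x_k^n)\,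 q_{n,r}^m(x)$, $k=1,\ldots,n$. *)

theory Defs
  imports "HOL-Analysis.Analysis"
begin

definition cheb_p :: "nat \<Rightarrow> real \<Rightarrow> real" where
  "cheb_p r x = (if r = 0 then sqrt (1 / pi) else sqrt (2 / pi) * cos (real r * arccos x))"

definition cheb_node :: "nat \<Rightarrow> nat \<Rightarrow> real" where
  "cheb_node n k = cos ((2 * real k - 1) * pi / (2 * real n))"

definition mu :: "nat \<Rightarrow> nat \<Rightarrow> nat \<Rightarrow> real" where
  "mu n m r = (if r \<le> n - m then 1
               else if n - m < r \<and> r < n + m then (real m + real n - real r) / (2 * real m)
               else 0)"

definition Phi :: "nat \<Rightarrow> nat \<Rightarrow> nat \<Rightarrow> real \<Rightarrow> real" where
  "Phi n m k x = pi / real n * (\<Sum>r = 0..n + m - 1. mu n m r * cheb_p r (cheb_node n k) * cheb_p r x)"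

definition q :: "nat \<Rightarrow> nat \<Rightarrow> nat \<Rightarrow> real \<Rightarrow> real" where
  "q n m r x = (if r \<le> n - m then cheb_p r x
                else mu n m r * cheb_p r x - mu n m (2 * n - r) * cheb_p (2 * n - r) x)"

definition nu :: "nat \<Rightarrow> nat \<Rightarrow> nat \<Rightarrow> real" where
  "nu n m r = (if r \<le> n - m then 1
               else (real m ^ 2 + (real n - real r) ^ 2) / (2 * real m ^ 2))"

definition phi_tilde :: "nat \<Rightarrow> nat \<Rightarrow> nat \<Rightarrow> real \<Rightarrow> real" where
  "phi_tilde n m k x = (\<Sum>r = 0..n - 1. sqrt (pi / (real n * nu n m r)) * cheb_p r (cheb_node n k) * q n m r x)"

end

theory Submission
  imports Defs
begin

lemma tele: "(\<Sum>h=1..N. 2 * sin a * cos ((2*real h - 1) * a)) = sin (2 * real N * a)"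
proof (induction N)
  case 0 then show ?case by simp
next
  case (Suc N)
  have "sin (2 * real (Suc N) * a) = sin ((2*real (Suc N) - 1) * a + a)" by (simp add: algebra_simps)
  moreover have "sin (2 * real N * a) = sin ((2*real (Suc N) - 1) * a - a)" by (simp add: algebra_simps)
  ultimately have d: "sin (2 * real (Suc N) * a) - sin (2 * real N * a) = 2 * sin a * cos ((2*real (Suc N) - 1) * a)"
    by (simp add: sin_add sin_diff)
  have "(\<Sum>h=1..Suc N. 2 * sin a * cos ((2*real h - 1) * a)) = (\<Sum>h=1..N. 2 * sin a * cos ((2*real h - 1) * a)) + 2 * sin a * cos ((2*real (Suc N) - 1) * a)"
    by simp
  then show ?case using Suc.IH d by linarith
qed

lemma cos_sum_zero:
  fixes n j :: nat assumes "0 < n" "\<not> (2*n) dvd j"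
  shows "(\<Sum>h=1..n. cos (real j * ((2*real h - 1)*pi/(2*real n)))) = 0"
proof -
  define a where "a = real j * pi / (2 * real n)"
  have s: "sin a \<noteq> 0"
  proof
    assume "sin a = 0"
    then obtain i :: int where i: "a = of_int i * pi" by (auto simp: sin_zero_iff_int2)
    then have "real j = 2 * real n * of_int i" using assms(1) by (simp add: a_def field_simps)
    then have "real_of_int (int j) = real_of_int (2 * int n * i)" by simp
    then have "int j = 2 * int n * i" using of_int_eq_iff by blast
    then have "int (2*n) dvd int j" by simp
    then show False using assms(2) by (simp only: int_dvd_int_iff)
  qed
  have e: "\<And>h. real j * ((2*real h - 1)*pi/(2*real n)) = (2*real h - 1) * a"
    by (simp add: a_def)
  have "2 * sin a * (\<Sum>h=1..n. cos ((2*real h - 1) * a)) = sin (2 * real n * a)"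
    using tele[of a n] by (simp add: sum_distrib_left)
  also have "2 * real n * a = real j * pi" using assms(1) by (simp add: a_def)
  also have "sin (real j * pi) = 0" by (metis sin_npi)
  finally have "(\<Sum>h=1..n. cos ((2*real h - 1) * a)) = 0" using s by simp
  then show ?thesis by (simp only: e)
qed

definition th :: "nat \<Rightarrow> nat \<Rightarrow> real" where
  "th n h = (2*real h - 1)*pi/(2*real n)"

lemma C_val:
  fixes n j :: nat assumes "0 < n" "j < 4*n"
  shows "(\<Sum>h=1..n. cos (real j * th n h)) = (if j = 0 then real n else if j = 2*n then - real n else 0)"
proof -
  consider "j = 0" | "j = 2*n" | "j \<noteq> 0" "j \<noteq> 2*n" by blast
  then show ?thesis
  proof cases
    case 1 then show ?thesis by simp
  next
    case 2
    have "\<And>h. h \<in> {1..n} \<Longrightarrow> cos (real j * th n h) = -1"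
    proof -
      fix h assume h: "h \<in> {1..n}"
      have eq: "real j * th n h = real (2*h-1) * pi" using 2 assms(1) h by (simp add: th_def of_nat_diff)
      have od: "odd (2*h-1)" using h by auto
      have "cos (real (2*h-1) * pi) = (-1)^(2*h-1)" by (rule cos_npi)
      also have "... = -1" using od by simp
      finally show "cos (real j * th n h) = -1" by (simp only: eq)
    qed
    then have "(\<Sum>h=1..n. cos (real j * th n h)) = (\<Sum>h=1..n. -1)" by (rule sum.cong[OF refl])
    then show ?thesis using 2 assms(1) by simp
  next
    case 3
    have "\<not> (2*n) dvd j"
    proof
      assume "(2*n) dvd j"
      then obtain c where c: "j = 2*n*c" by blast
      consider "c = 0" | "c = 1" | "c \<ge> 2" by linarith
      then show False
      proof cases
        case 1 then show False using 3 c by simp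
      next
        case 2 then show False using 3 c by simp
      next
        case 3
        have "2*n*2 \<le> 2*n*c" using 3 by (intro mult_le_mono2) 
        then show False using c assms(2) by linarith
      qed
    qed
    then show ?thesis using cos_sum_zero[OF assms(1)] 3 unfolding th_def by simp
  qed
qed

lemma node_p:
  assumes "0 < n" "1 \<le> h" "h \<le> n"
  shows "cheb_p r (cheb_node n h) = (if r = 0 then sqrt (1/pi) else sqrt (2/pi) * cos (real r * th n h))"
proof -
  have "0 \<le> th n h" using assms by (simp add: th_def)
  moreover have "th n h \<le> pi"
  proof -
    have "(2*real h - 1) \<le> 2*real n" using assms by simp
    then have "(2*real h - 1) * pi \<le> 2*real n * pi" by (simp add: mult_right_mono)
    then show ?thesis using assms(1) by (simp add: th_def divide_le_eq mult.commute)
  qed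
  ultimately have "arccos (cheb_node n h) = th n h" by (simp add: cheb_node_def th_def[symmetric] arccos_cos)
  then show ?thesis by (simp add: cheb_p_def)
qed

lemma cos_prod_th:
  fixes r s :: nat
  shows "cos (real r * t) * cos (real s * t) =
    (cos (real (if s \<le> r then r - s else s - r) * t) + cos (real (r + s) * t)) / 2"
proof (cases "s \<le> r")
  case True
  have "cos (real r * t) * cos (real s * t) = (cos (real r * t - real s * t) + cos (real r * t + real s * t)) / 2"
    by (rule cos_times_cos)
  also have "real r * t - real s * t = real (r - s) * t" using True by (simp add: of_nat_diff algebra_simps)
  also have "real r * t + real s * t = real (r + s) * t" by (simp add: algebra_simps)
  finally show ?thesis using True by simp
next
  case False
  have "cos (real r * t) * cos (real s * t) = (cos (real s * t - real r * t) + cos (real s * t + real r * t)) / 2"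
    by (subst mult.commute) (rule cos_times_cos)
  also have "real s * t - real r * t = real (s - r) * t" using False by (simp add: of_nat_diff algebra_simps)
  also have "real s * t + real r * t = real (r + s) * t" by (simp add: algebra_simps)
  finally show ?thesis using False by simp
qed

lemma ortho:
  assumes n: "0 < n" and r: "r < n" and s: "s < 2*n"
  shows "(\<Sum>h=1..n. cheb_p r (cheb_node n h) * cheb_p s (cheb_node n h)) =
     real n / pi * ((if s = r then 1 else 0) - (if s = 2*n - r then 1 else 0))"
proof -
  have pi0: "pi > 0" by simp
  have s1: "sqrt (1/pi) * sqrt (1/pi) = 1/pi" by simp
  have s2: "sqrt (2/pi) * sqrt (2/pi) = 2/pi" by simp
  have eqs: "(\<Sum>h=1..n. cheb_p r (cheb_node n h) * cheb_p s (cheb_node n h)) =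
    (\<Sum>h=1..n. (if r = 0 then sqrt (1/pi) else sqrt (2/pi) * cos (real r * th n h)) *
                (if s = 0 then sqrt (1/pi) else sqrt (2/pi) * cos (real s * th n h)))"
    by (rule sum.cong[OF refl]) (simp add: node_p[OF n])
  consider "r = 0" "s = 0" | "r = 0" "s \<noteq> 0" | "r \<noteq> 0" "s = 0" | "r \<noteq> 0" "s \<noteq> 0" by blast
  then show ?thesis
  proof cases
    case 1
    then show ?thesis unfolding eqs using n s1 by simp
  next
    case 2
    have "(\<Sum>h=1..n. cos (real s * th n h)) = 0" using C_val[OF n, of s] 2 s by simp
    then have "(\<Sum>h=1..n. sqrt (1/pi) * (sqrt (2/pi) * cos (real s * th n h))) = 0"
      by (simp add: sum_distrib_left[symmetric])
    then show ?thesis unfolding eqs using 2 s by simp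
  next
    case 3
    have "(\<Sum>h=1..n. cos (real r * th n h)) = 0" using C_val[OF n, of r] 3 r by simp
    then have "(\<Sum>h=1..n. sqrt (2/pi) * cos (real r * th n h) * sqrt (1/pi)) = 0"
      by (simp add: sum_distrib_left[symmetric] sum_distrib_right[symmetric])
    then show ?thesis unfolding eqs using 3 r by simp
  next
    case 4
    define d where "d = (if s \<le> r then r - s else s - r)"
    have "(\<Sum>h=1..n. (sqrt (2/pi) * cos (real r * th n h)) * (sqrt (2/pi) * cos (real s * th n h)))
        = (\<Sum>h=1..n. 1/pi * (cos (real d * th n h) + cos (real (r + s) * th n h)))"
    proof (rule sum.cong[OF refl])
      fix h
      have "(sqrt (2/pi) * cos (real r * th n h)) * (sqrt (2/pi) * cos (real s * th n h))
          = (sqrt (2/pi) * sqrt (2/pi)) * (cos (real r * th n h) * cos (real s * th n h))" by (simp only: ac_simps)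
      also have "... = 2/pi * ((cos (real d * th n h) + cos (real (r + s) * th n h)) / 2)"
        by (simp only: s2 cos_prod_th d_def)
      also have "... = 1/pi * (cos (real d * th n h) + cos (real (r + s) * th n h))" by (simp add: field_simps)
      finally show "(sqrt (2/pi) * cos (real r * th n h)) * (sqrt (2/pi) * cos (real s * th n h))
        = 1/pi * (cos (real d * th n h) + cos (real (r + s) * th n h))" .
    qed
    also have "... = 1/pi * ((\<Sum>h=1..n. cos (real d * th n h)) + (\<Sum>h=1..n. cos (real (r + s) * th n h)))"
      by (simp only: sum_distrib_left[symmetric] sum.distrib)
    also have "(\<Sum>h=1..n. cos (real d * th n h)) = (if s = r then real n else 0)"
      using C_val[OF n, of d] r s unfolding d_def by auto
    also have "(\<Sum>h=1..n. cos (real (r + s) * th n h)) = (if s = 2*n - r then - real n else 0)"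
      using C_val[OF n, of "r+s"] r s 4 by auto
    finally show ?thesis unfolding eqs using 4 r by auto
  qed
qed

theorem proposition2:
  fixes n m k :: nat and x :: real
  assumes "0 < m" and "m < n" and "1 \<le> k" and "k \<le> n"
    and "-1 \<le> x" and "x \<le> 1"
  shows "phi_tilde n m k x =
    sqrt (pi / real n) * (\<Sum>h = 1..n.
      (\<Sum>r = 0..n - 1. cheb_p r (cheb_node n k) * cheb_p r (cheb_node n h) / sqrt (nu n m r))
      * Phi n m h x)"
proof -
  have n: "0 < n" using assms by simp
  define a where "a r = cheb_p r (cheb_node n k) / sqrt (nu n m r)" for r
  define P where "P s = mu n m s * cheb_p s x" for s
  define c where "c = pi / real n"
  define D where "D r s = (\<Sum>h=1..n. cheb_p r (cheb_node n h) * cheb_p s (cheb_node n h))" for r s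
  have "(\<Sum>h = 1..n.
      (\<Sum>r = 0..n - 1. cheb_p r (cheb_node n k) * cheb_p r (cheb_node n h) / sqrt (nu n m r))
      * Phi n m h x) = (\<Sum>h = 1..n. (\<Sum>r = 0..n - 1. a r * cheb_p r (cheb_node n h)) *
          (c * (\<Sum>s = 0..n + m - 1. P s * cheb_p s (cheb_node n h))))"
    unfolding Phi_def a_def P_def c_def
    by (rule sum.cong[OF refl]) (simp add: ac_simps)
  also have "... = (\<Sum>h = 1..n. c * (\<Sum>r = 0..n - 1. \<Sum>s = 0..n + m - 1.
          a r * P s * (cheb_p r (cheb_node n h) * cheb_p s (cheb_node n h))))"
    by (rule sum.cong[OF refl]) (simp add: sum_product ac_simps)
  also have "... = c * (\<Sum>r = 0..n - 1. \<Sum>s = 0..n + m - 1. \<Sum>h = 1..n.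
          a r * P s * (cheb_p r (cheb_node n h) * cheb_p s (cheb_node n h)))"
  proof -
    have sw: "\<And>F A B C. (\<Sum>h\<in>A. \<Sum>r\<in>B. \<Sum>s\<in>C. F h r s) = (\<Sum>r\<in>B. \<Sum>s\<in>C. \<Sum>h\<in>A. F h r s)"
      by (subst sum.swap) (rule sum.cong[OF refl], rule sum.swap)
    show ?thesis by (simp only: sum_distrib_left[symmetric] sw)
  qed
  also have "... = c * (\<Sum>r = 0..n - 1. \<Sum>s = 0..n + m - 1. a r * P s * D r s)"
    by (simp add: D_def sum_distrib_left)
  also have "... = c * (\<Sum>r = 0..n - 1. a r * (real n / pi) * (P r - (if n - m < r then P (2*n - r) else 0)))"
  proof -
    have "(\<Sum>s = 0..n + m - 1. a r * P s * D r s) = a r * (real n / pi) * (P r - (if n - m < r then P (2*n - r) else 0))"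
      if r: "r \<in> {0..n-1}" for r
    proof -
      have "(\<Sum>s = 0..n + m - 1. a r * P s * D r s) = (\<Sum>s = 0..n + m - 1.
          a r * (real n / pi) * ((if s = r then P s else 0) - (if s = 2*n - r then P s else 0)))"
      proof (rule sum.cong[OF refl])
        fix s assume "s \<in> {0..n + m - 1}"
        then have "s < 2*n" using assms by auto
        moreover have "r < n" using r n by auto
        ultimately show "a r * P s * D r s = a r * (real n / pi) * ((if s = r then P s else 0) - (if s = 2*n - r then P s else 0))"
          unfolding D_def using ortho[OF n] by simp
      qed
      also have "... = a r * (real n / pi) * ((\<Sum>s = 0..n + m - 1. if s = r then P s else 0) - (\<Sum>s = 0..n + m - 1. if s = 2*n - r then P s else 0))"
        by (simp only: sum_distrib_left[symmetric] sum_subtractf)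
      also have "(\<Sum>s = 0..n + m - 1. if s = r then P s else 0) = P r" using r assms by simp
      also have "(\<Sum>s = 0..n + m - 1. if s = 2*n - r then P s else 0) = (if n - m < r then P (2*n - r) else 0)"
        using r assms by (auto simp: sum.delta)
      finally show ?thesis .
    qed
    then show ?thesis by simp
  qed
  finally have R: "sqrt (pi / real n) * (\<Sum>h = 1..n.
      (\<Sum>r = 0..n - 1. cheb_p r (cheb_node n k) * cheb_p r (cheb_node n h) / sqrt (nu n m r))
      * Phi n m h x) = (\<Sum>r = 0..n - 1. sqrt (pi / real n) * c * (a r * (real n / pi) * (P r - (if n - m < r then P (2*n - r) else 0))))"
    by (simp add: sum_distrib_left ac_simps)
  show ?thesis unfolding R phi_tilde_def
  proof (rule sum.cong[OF refl])
    fix r assume r: "r \<in> {0..n-1}"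
    have cc: "c * (real n / pi) = 1" using n by (simp add: c_def)
    have "(real m)^2 > 0" using assms by simp
    then have nupos: "nu n m r > 0" unfolding nu_def
      by (simp add: add_pos_nonneg)
    have sq: "sqrt (pi / (real n * nu n m r)) = sqrt (pi / real n) / sqrt (nu n m r)"
      by (simp add: real_sqrt_divide real_sqrt_mult divide_divide_eq_left)
    have "sqrt (pi / real n) * c * (a r * (real n / pi) * (P r - (if n - m < r then P (2*n - r) else 0)))
       = sqrt (pi / real n) * (c * (real n / pi)) * a r * (P r - (if n - m < r then P (2*n - r) else 0))"
      by (simp only: mult_ac)
    also have "... = sqrt (pi / real n) * a r * (P r - (if n - m < r then P (2*n - r) else 0))"
      by (simp only: cc mult_1_right)
    also have "... = sqrt (pi / (real n * nu n m r)) * cheb_p r (cheb_node n k) * q n m r x"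
      unfolding sq a_def P_def q_def by (auto simp: mu_def)
    finally show "sqrt (pi / (real n * nu n m r)) * cheb_p r (cheb_node n k) * q n m r x =
      sqrt (pi / real n) * c * (a r * (real n / pi) * (P r - (if n - m < r then P (2*n - r) else 0)))" by simp
  qed
qed

end
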